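(* Consider Algorithm 1 (described in the context) run on a strongly connected digraph $\mathcal{G}_d$ with edge bounds $l_{ji},u_{ji}$, under any realization of transmission delays bounded by $\overline{\tau}<\infty$. Then for all $k\ge0$, $0\le\varepsilon[k+1]\le\varepsilon[k]$.
   Context: Setting: $\mathcal{G}_d=(\mathcal{V},\mathcal{E})$ is a strongly connected digraph, $\mathcal{V}=\{v_1,\dots,v_n\}$, $n\ge2$; an edge $(v_j,v_i)$ carries flow from $v_i$ to $v_j$. $\mathcal{N}_j^-=\{v_i:(v_j,v_i)\in\mathcal{E}\}$, $\mathcal{N}_j^+=\{v_l:(v_l,v_j)\in\mathcal{E}\}$, $\mathcal{D}_j=|\mathcal{N}_j^-|+|\mathcal{N}_j^+|$. Each edge has real bounds $1\le l_{ji}\le u_{ji}$. Communication is bidirectional along every edge. Projection: $[x]_{ji}=\max\{\lceil l_{ji}\rceil,\min\{\lfloor u_{ji}\rfloor,x\}\}$. State: for each edge $(v_l,v_j)$, the tail $v_j$ holds the actual flow $f_{lj}[k]$; for each edge $(v_j,v_i)$, the head $v_j$ holds a perceived flow $f^{(p)}_{ji}[k]$. Actual balance $b_j[k]=\sum_{v_i\in\mathcal{N}_j^-}f_{ji}[k]-\sum_{v_l\in\mathcal{N}_j^+}f_{lj}[k]$; perceived balance $b^{(p)}_j[k]=\sum_{v_i\in\mathcal{N}_j^-}f^{(p)}_{ji}[k]-\sum_{v_l\in\mathcal{N}_j^+}f_{lj}[k]$; total imbalance $\varepsilon[k]=\sum_j|b_j[k]|$. Algorithm 1. Initialization: $f_{ji}[0]=f^{(p)}_{ji}[0]=\lceil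 l_{ji}\rceil$ for all edges; each $v_j$ fixes a cyclic order of its $\mathcal{D}_j$ incident (incoming and outgoing) edges and a pointer into it. Iteration $k=0,1,2,\dots$, at each node $v_j$: (1) compute $b^{(p)}_j[k]$. (2) If $b^{(p)}_j[k]>0$, starting at the pointer and cycling through the order, visit edges one at a time: at an outgoing edge $(v_l,v_j)$, if $f_{lj}[k]+c^{(j)}_{lj}[k]<\lfloor u_{lj}\rfloor$ add $1$ to $c^{(j)}_{lj}[k]$; at an incoming edge $(v_j,v_i)$, if $f^{(p)}_{ji}[k]+c^{(j)}_{ji}[k]>\lceil l_{ji}\rceil$ subtract $1$ from $c^{(j)}_{ji}[k]$ (the $c$'s start at $0$; edges at their limit are skipped); stop as soon as the total number of unit changes equals $b^{(p)}_j[k]$, leaving the pointer at the next edge. If $b^{(p)}_j[k]\le 0$, all $c^{(j)}[k]=0$. (3) $v_j$ transmits $c^{(j)}_{lj}[k]$ to each out-neighbor $v_l$ and $c^{(j)}_{ji}[k]$ to each in-neighbor $v_i$. A message sent at step $k$ over a link in a given direction is delivered at step $k+\tau$, where the integer $\tau\in[0,\overline{\tau}]$ is arbitrary (unknown, time-varying, independent across links and directions). (4) $v_j$ forms $\overline{c}^{(l)}_{lj}[k]$ (resp. $\overline{c}^{(i)}_{ji}[k]$) as the sum of all values $c^{(l)}_{lj}[k_0]$ (resp. $c^{(i)}_{ji}[k_0]$) sent by $v_l$ (resp. $v_i$) that are delivered at step $k$ (zero if none). (5)–(6) $f_{lj}[k+1]=[f_{lj}[k]+c^{(j)}_{lj}[k]+\overline{c}^{(l)}_{lj}[k]]_{lj}$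 and $f^{(p)}_{ji}[k+1]=[f^{(p)}_{ji}[k]+c^{(j)}_{ji}[k]+\overline{c}^{(i)}_{ji}[k]]_{ji}$. *)

theory Defs
  imports Complex_Main
begin

text \<open>Edges are pairs (j,i) carrying flow from i to j.  For an edge e = (j,i):
  the head is fst e = j (holds the perceived flow), the tail is snd e = i
  (holds the actual flow).\<close>

definition proj :: "('v \<times> 'v \<Rightarrow> real) \<Rightarrow> ('v \<times> 'v \<Rightarrow> real) \<Rightarrow> 'v \<times> 'v \<Rightarrow> int \<Rightarrow> int" where
  "proj l u e x = max \<lceil>l e\<rceil> (min \<lfloor>u e\<rfloor> x)"

definition balance :: "('v \<times> 'v) set \<Rightarrow> ('v \<times> 'v \<Rightarrow> int) \<Rightarrow> 'v \<Rightarrow> int" where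
  "balance E f j = (\<Sum>e\<in>{e\<in>E. fst e = j}. f e) - (\<Sum>e\<in>{e\<in>E. snd e = j}. f e)"

definition pbalance :: "('v \<times> 'v) set \<Rightarrow> ('v \<times> 'v \<Rightarrow> int) \<Rightarrow> ('v \<times> 'v \<Rightarrow> int) \<Rightarrow> 'v \<Rightarrow> int" where
  "pbalance E f fp j = (\<Sum>e\<in>{e\<in>E. fst e = j}. fp e) - (\<Sum>e\<in>{e\<in>E. snd e = j}. f e)"

definition total_imbalance :: "'v set \<Rightarrow> ('v \<times> 'v) set \<Rightarrow> ('v \<times> 'v \<Rightarrow> int) \<Rightarrow> int" where
  "total_imbalance V E f = (\<Sum>j\<in>V. \<bar>balance E f j\<bar>)"

definition incident :: "('v \<times> 'v) set \<Rightarrow> 'v \<Rightarrow> ('v \<times> 'v) set" where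
  "incident E j = {e\<in>E. fst e = j \<or> snd e = j}"

text \<open>State: (pointer, changes c, number of
  unit changes made so far).  L is the cyclic order of j's incident edges, f / fp
  the current actual / perceived flows.\<close>
definition visit :: "('v \<times> 'v \<Rightarrow> real) \<Rightarrow> ('v \<times> 'v \<Rightarrow> real) \<Rightarrow> 'v \<Rightarrow> ('v \<times> 'v) list
    \<Rightarrow> ('v \<times> 'v \<Rightarrow> int) \<Rightarrow> ('v \<times> 'v \<Rightarrow> int)
    \<Rightarrow> nat \<times> ('v \<times> 'v \<Rightarrow> int) \<times> int \<Rightarrow> nat \<times> ('v \<times> 'v \<Rightarrow> int) \<times> int" where
  "visit l u j L f fp st =
    (case st of (p, c, cnt) \<Rightarrow>
      (let e = L ! p; p' = Suc p mod length L in
       if snd e = j then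
         (if f e + c e < \<lfloor>u e\<rfloor> then (p', c(e := c e + 1), cnt + 1) else (p', c, cnt))
       else
         (if fp e + c e > \<lceil>l e\<rceil> then (p', c(e := c e - 1), cnt + 1) else (p', c, cnt))))"

text \<open>Sum of all values sent by node s to node r on edge e that are delivered at step k;
  d s r k0 is the delay of the message sent from s to r at step k0.\<close>
definition delivered :: "(nat \<Rightarrow> 'v \<Rightarrow> 'v \<times> 'v \<Rightarrow> int) \<Rightarrow> ('v \<Rightarrow> 'v \<Rightarrow> nat \<Rightarrow> nat)
    \<Rightarrow> 'v \<Rightarrow> 'v \<Rightarrow> 'v \<times> 'v \<Rightarrow> nat \<Rightarrow> int" where
  "delivered c d s r e k = (\<Sum>k0\<in>{k0. k0 \<le> k \<and> k0 + d s r k0 = k}. c k0 s e)"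

end

theory Submission imports Defs begin

lemma sum_upd_int:
  fixes c :: "'a \<Rightarrow> int"
  assumes "finite S"
  shows "sum (c(e := x)) S = sum c S + (if e \<in> S then x - c e else 0)"
proof (cases "e \<in> S")
  case True
  have "sum (c(e := x)) S = (c(e:=x)) e + sum (c(e := x)) (S - {e})"
    using assms True by (simp add: sum.remove)
  also have "sum (c(e := x)) (S - {e}) = sum c (S - {e})"
    by (rule sum.cong) auto
  also have "sum c S = c e + sum c (S - {e})" using assms True by (simp add: sum.remove)
  ultimately show ?thesis using True by simp
next
  case False
  have "sum (c(e := x)) S = sum c S" by (rule sum.cong) (use False in auto)
  then show ?thesis using False by simp
qed

definition vinv :: "('v \<times> 'v) set \<Rightarrow> ('v \<times> 'v \<Rightarrow> real) \<Rightarrow> ('v \<times> 'v \<Rightarrow> real) \<Rightarrow> 'v \<Rightarrow> ('v \<times> 'v) list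
    \<Rightarrow> ('v \<times> 'v \<Rightarrow> int) \<Rightarrow> ('v \<times> 'v \<Rightarrow> int) \<Rightarrow> nat \<times> ('v \<times> 'v \<Rightarrow> int) \<times> int \<Rightarrow> bool" where
  "vinv E l u j L f fp st = (case st of (p, c, cnt) \<Rightarrow>
     p < length L \<and>
     cnt = (\<Sum>e\<in>{e\<in>E. snd e = j}. c e) - (\<Sum>e\<in>{e\<in>E. fst e = j}. c e) \<and>
     (\<forall>e. e \<notin> set L \<longrightarrow> c e = 0) \<and>
     (\<forall>e. snd e = j \<longrightarrow> 0 \<le> c e \<and> (f e \<le> max \<lceil>l e\<rceil> \<lfloor>u e\<rfloor> \<longrightarrow> f e + c e \<le> max \<lceil>l e\<rceil> \<lfloor>u e\<rfloor>)) \<and>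
     (\<forall>e. snd e \<noteq> j \<longrightarrow> c e \<le> 0 \<and> (\<lceil>l e\<rceil> \<le> fp e \<longrightarrow> \<lceil>l e\<rceil> \<le> fp e + c e)))"

lemma vinv_I:
  assumes "p < length L"
    "cnt = (\<Sum>e\<in>{e\<in>E. snd e = j}. c e) - (\<Sum>e\<in>{e\<in>E. fst e = j}. c e)"
    "\<And>e. e \<notin> set L \<Longrightarrow> c e = 0"
    "\<And>e. snd e = j \<Longrightarrow> 0 \<le> c e"
    "\<And>e. snd e = j \<Longrightarrow> f e \<le> max \<lceil>l e\<rceil> \<lfloor>u e\<rfloor> \<Longrightarrow> f e + c e \<le> max \<lceil>l e\<rceil> \<lfloor>u e\<rfloor>"
    "\<And>e. snd e \<noteq> j \<Longrightarrow> c e \<le> 0"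
    "\<And>e. snd e \<noteq> j \<Longrightarrow> \<lceil>l e\<rceil> \<le> fp e \<Longrightarrow> \<lceil>l e\<rceil> \<le> fp e + c e"
  shows "vinv E l u j L f fp (p, c, cnt)"
  using assms unfolding vinv_def prod.case by blast

lemma vinv_D:
  assumes "vinv E l u j L f fp (p, c, cnt)"
  shows "p < length L"
    "cnt = (\<Sum>e\<in>{e\<in>E. snd e = j}. c e) - (\<Sum>e\<in>{e\<in>E. fst e = j}. c e)"
    "\<And>e. e \<notin> set L \<Longrightarrow> c e = 0"
    "\<And>e. snd e = j \<Longrightarrow> 0 \<le> c e"
    "\<And>e. snd e = j \<Longrightarrow> f e \<le> max \<lceil>l e\<rceil> \<lfloor>u e\<rfloor> \<Longrightarrow> f e + c e \<le> max \<lceil>l e\<rceil> \<lfloor>u e\<rfloor>"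
    "\<And>e. snd e \<noteq> j \<Longrightarrow> c e \<le> 0"
    "\<And>e. snd e \<noteq> j \<Longrightarrow> \<lceil>l e\<rceil> \<le> fp e \<Longrightarrow> \<lceil>l e\<rceil> \<le> fp e + c e"
  using assms unfolding vinv_def prod.case by blast+

lemma vinv_step:
  fixes E :: "('v \<times> 'v) set"
  assumes fin: "finite E" and LE: "set L \<subseteq> E" and inc: "\<forall>e\<in>set L. fst e = j \<or> snd e = j"
    and nl: "\<forall>v. (v, v) \<notin> E"
    and I: "vinv E l u j L f fp st"
  shows "vinv E l u j L f fp (visit l u j L f fp st)"
proof -
  obtain p c cnt where st: "st = (p, c, cnt)" by (cases st) auto
  note D = vinv_D[OF I[unfolded st]]
  have pl: "p < length L" by (rule D(1))
  define e where "e = L ! p"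
  have eL: "e \<in> set L" using pl e_def by simp
  have eE: "e \<in> E" using eL LE by auto
  have pl': "Suc p mod length L < length L" using pl by (intro mod_less_divisor) linarith
  show ?thesis
  proof (cases "snd e = j")
    case True
    have nf: "fst e \<noteq> j" using True nl eE by (cases e) auto
    show ?thesis
    proof (cases "f e + c e < \<lfloor>u e\<rfloor>")
      case T2: True
      have vis: "visit l u j L f fp st = (Suc p mod length L, c(e := c e + 1), cnt + 1)"
        using True T2 st by (simp add: visit_def Let_def e_def)
      have s1: "(\<Sum>x\<in>{x\<in>E. snd x = j}. (c(e := c e + 1)) x) = (\<Sum>x\<in>{x\<in>E. snd x = j}. c x) + 1"
        using sum_upd_int[of "{x\<in>E. snd x = j}" c e "c e + 1"] fin eE True by simp
      have s2: "(\<Sum>x\<in>{x\<in>E. fst x = j}. (c(e := c e + 1)) x) = (\<Sum>x\<in>{x\<in>E. fst x = j}. c x)"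
        using sum_upd_int[of "{x\<in>E. fst x = j}" c e "c e + 1"] fin nf by simp
      show ?thesis unfolding vis
      proof (rule vinv_I)
        show "cnt + 1 = (\<Sum>x\<in>{x\<in>E. snd x = j}. (c(e := c e + 1)) x) - (\<Sum>x\<in>{x\<in>E. fst x = j}. (c(e := c e + 1)) x)"
          unfolding s1 s2 D(2) by simp
      next
        fix x :: "'v \<times> 'v" assume "x \<notin> set L" then show "(c(e := c e + 1)) x = 0" using eL D(3) by auto
      next
        fix x :: "'v \<times> 'v" assume "snd x = j" then show "0 \<le> (c(e := c e + 1)) x" using D(4)[of x] D(4)[of e] True by (auto simp: fun_upd_def)
      next
        fix x :: "'v \<times> 'v" assume "snd x = j" "f x \<le> max \<lceil>l x\<rceil> \<lfloor>u x\<rfloor>"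
        then show "f x + (c(e := c e + 1)) x \<le> max \<lceil>l x\<rceil> \<lfloor>u x\<rfloor>" using D(5)[of x] D(5)[of e] T2 by (auto simp: fun_upd_def)
      next
        fix x :: "'v \<times> 'v" assume "snd x \<noteq> j" then show "(c(e := c e + 1)) x \<le> 0" using D(6)[of x] D(6)[of e] True by (auto simp: fun_upd_def)
      next
        fix x :: "'v \<times> 'v" assume "snd x \<noteq> j" "\<lceil>l x\<rceil> \<le> fp x"
        then show "\<lceil>l x\<rceil> \<le> fp x + (c(e := c e + 1)) x" using D(7)[of x] D(7)[of e] True by (auto simp: fun_upd_def)
      qed (rule pl')
    next
      case F2: False
      have vis: "visit l u j L f fp st = (Suc p mod length L, c, cnt)"
        using True F2 st by (simp add: visit_def Let_def e_def)
      show ?thesis unfolding vis by (rule vinv_I[OF pl' D(2-7)])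
    qed
  next
    case False
    have nf: "fst e = j" using False inc eL by auto
    show ?thesis
    proof (cases "fp e + c e > \<lceil>l e\<rceil>")
      case T2: True
      have vis: "visit l u j L f fp st = (Suc p mod length L, c(e := c e - 1), cnt + 1)"
        using False T2 st by (simp add: visit_def Let_def e_def)
      have s1: "(\<Sum>x\<in>{x\<in>E. snd x = j}. (c(e := c e - 1)) x) = (\<Sum>x\<in>{x\<in>E. snd x = j}. c x)"
        using sum_upd_int[of "{x\<in>E. snd x = j}" c e "c e - 1"] fin False by simp
      have s2: "(\<Sum>x\<in>{x\<in>E. fst x = j}. (c(e := c e - 1)) x) = (\<Sum>x\<in>{x\<in>E. fst x = j}. c x) - 1"
        using sum_upd_int[of "{x\<in>E. fst x = j}" c e "c e - 1"] fin nf eE by simp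
      show ?thesis unfolding vis
      proof (rule vinv_I)
        show "cnt + 1 = (\<Sum>x\<in>{x\<in>E. snd x = j}. (c(e := c e - 1)) x) - (\<Sum>x\<in>{x\<in>E. fst x = j}. (c(e := c e - 1)) x)"
          unfolding s1 s2 D(2) by simp
      next
        fix x :: "'v \<times> 'v" assume "x \<notin> set L" then show "(c(e := c e - 1)) x = 0" using eL D(3) by auto
      next
        fix x :: "'v \<times> 'v" assume "snd x = j" then show "0 \<le> (c(e := c e - 1)) x" using D(4)[of x] D(4)[of e] False by (auto simp: fun_upd_def)
      next
        fix x :: "'v \<times> 'v" assume "snd x = j" "f x \<le> max \<lceil>l x\<rceil> \<lfloor>u x\<rfloor>"
        then show "f x + (c(e := c e - 1)) x \<le> max \<lceil>l x\<rceil> \<lfloor>u x\<rfloor>" using D(5)[of x] D(5)[of e] False by (auto simp: fun_upd_def)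
      next
        fix x :: "'v \<times> 'v" assume "snd x \<noteq> j" then show "(c(e := c e - 1)) x \<le> 0" using D(6)[of x] D(6)[of e] by (auto simp: fun_upd_def)
      next
        fix x :: "'v \<times> 'v" assume "snd x \<noteq> j" "\<lceil>l x\<rceil> \<le> fp x"
        then show "\<lceil>l x\<rceil> \<le> fp x + (c(e := c e - 1)) x" using D(7)[of x] D(7)[of e] T2 by (auto simp: fun_upd_def)
      qed (rule pl')
    next
      case F2: False
      have vis: "visit l u j L f fp st = (Suc p mod length L, c, cnt)"
        using False F2 st by (simp add: visit_def Let_def e_def)
      show ?thesis unfolding vis by (rule vinv_I[OF pl' D(2-7)])
    qed
  qed
qed

lemma vinv_iter:
  fixes E :: "('v \<times> 'v) set"
  assumes fin: "finite E" and LE: "set L \<subseteq> E" and inc: "\<forall>e\<in>set L. fst e = j \<or> snd e = j"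
    and nl: "\<forall>v. (v, v) \<notin> E"
    and I: "vinv E l u j L f fp st"
  shows "vinv E l u j L f fp ((visit l u j L f fp ^^ m) st)"
proof (induction m)
  case 0
  then show ?case using I by simp
next
  case (Suc m)
  then show ?case using vinv_step[OF fin LE inc nl Suc] by simp
qed

locale alg =
  fixes V :: "'v set" and E :: "('v \<times> 'v) set"
    and l u :: "'v \<times> 'v \<Rightarrow> real"
    and ord :: "'v \<Rightarrow> ('v \<times> 'v) list"
    and d :: "'v \<Rightarrow> 'v \<Rightarrow> nat \<Rightarrow> nat" and taubar :: nat
    and f fp :: "nat \<Rightarrow> 'v \<times> 'v \<Rightarrow> int"
    and c :: "nat \<Rightarrow> 'v \<Rightarrow> 'v \<times> 'v \<Rightarrow> int"
    and ptr :: "nat \<Rightarrow> 'v \<Rightarrow> nat"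
  assumes finV: "finite V" and cardV: "card V \<ge> 2"
    and EV: "E \<subseteq> V \<times> V" and noloop: "\<forall>v. (v, v) \<notin> E"
    and strong: "\<forall>x\<in>V. \<forall>y\<in>V. (x, y) \<in> E\<^sup>*"
    and bounds: "\<forall>e\<in>E. 1 \<le> l e \<and> l e \<le> u e"
    and order: "\<forall>j\<in>V. distinct (ord j) \<and> set (ord j) = incident E j"
    and delay: "\<forall>s r k. d s r k \<le> taubar"
    and init_f: "\<forall>e\<in>E. f 0 e = \<lceil>l e\<rceil> \<and> fp 0 e = \<lceil>l e\<rceil>"
    and init_ptr: "\<forall>j\<in>V. ptr 0 j < length (ord j)"
    and step_pos: "\<forall>k. \<forall>j\<in>V. pbalance E (f k) (fp k) j > 0 \<longrightarrow>
        (\<exists>m. (visit l u j (ord j) (f k) (fp k) ^^ m) (ptr k j, \<lambda>_. 0, 0)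
               = (ptr (Suc k) j, c k j, pbalance E (f k) (fp k) j)
           \<and> (\<forall>m'<m. snd (snd ((visit l u j (ord j) (f k) (fp k) ^^ m') (ptr k j, \<lambda>_. 0, 0)))
                      \<noteq> pbalance E (f k) (fp k) j))"
    and step_nonpos: "\<forall>k. \<forall>j\<in>V. pbalance E (f k) (fp k) j \<le> 0 \<longrightarrow>
        ptr (Suc k) j = ptr k j \<and> (\<forall>e. c k j e = 0)"
    and upd_f: "\<forall>k. \<forall>e\<in>E. f (Suc k) e =
        proj l u e (f k e + c k (snd e) e + delivered c d (fst e) (snd e) e k)"
    and upd_fp: "\<forall>k. \<forall>e\<in>E. fp (Suc k) e =
        proj l u e (fp k e + c k (fst e) e + delivered c d (snd e) (fst e) e k)"
begin

definition U where "U e = max \<lceil>l e\<rceil> \<lfloor>u e\<rfloor>"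
definition P where "P s r e k = (\<Sum>k0\<in>{k0. k0 < k \<and> k \<le> k0 + d s r k0}. c k0 s e)"
definition bp where "bp k j = pbalance E (f k) (fp k) j"

lemma finE: "finite E"
  using finV EV finite_subset by blast

lemma ptr_bound: "j \<in> V \<Longrightarrow> ptr k j < length (ord j)"
proof (induction k)
  case 0 then show ?case using init_ptr by simp
next
  case (Suc k)
  show ?case
  proof (cases "pbalance E (f k) (fp k) j > 0")
    case True
    then obtain m where m: "(visit l u j (ord j) (f k) (fp k) ^^ m) (ptr k j, \<lambda>_. 0, 0)
               = (ptr (Suc k) j, c k j, pbalance E (f k) (fp k) j)"
      using step_pos Suc.prems by blast
    have i0: "vinv E l u j (ord j) (f k) (fp k) (ptr k j, \<lambda>_. 0, 0)"
      by (rule vinv_I) (use Suc in auto)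
    have "vinv E l u j (ord j) (f k) (fp k) (ptr (Suc k) j, c k j, pbalance E (f k) (fp k) j)"
      unfolding m[symmetric]
      by (rule vinv_iter[OF finE _ _ noloop i0]) (use order Suc.prems in \<open>auto simp: incident_def\<close>)
    then show ?thesis by (rule vinv_D(1))
  next
    case False
    then show ?thesis using step_nonpos Suc by auto
  qed
qed

lemma c_props:
  assumes j: "j \<in> V"
  shows "vinv E l u j (ord j) (f k) (fp k) (ptr (Suc k) j, c k j, if bp k j > 0 then bp k j else 0)"
proof (cases "bp k j > 0")
  case True
  then obtain m where m: "(visit l u j (ord j) (f k) (fp k) ^^ m) (ptr k j, \<lambda>_. 0, 0)
             = (ptr (Suc k) j, c k j, pbalance E (f k) (fp k) j)"
    using step_pos j unfolding bp_def by blast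
  have i0: "vinv E l u j (ord j) (f k) (fp k) (ptr k j, \<lambda>_. 0, 0)"
    by (rule vinv_I) (use ptr_bound[OF j] in auto)
  have "vinv E l u j (ord j) (f k) (fp k) (ptr (Suc k) j, c k j, pbalance E (f k) (fp k) j)"
    unfolding m[symmetric]
    by (rule vinv_iter[OF finE _ _ noloop i0]) (use order j in \<open>auto simp: incident_def\<close>)
  then show ?thesis using True unfolding bp_def by simp
next
  case False
  then have z: "\<forall>e. c k j e = 0" using step_nonpos j unfolding bp_def by auto
  show ?thesis using False
    by (intro vinv_I) (simp_all add: z ptr_bound[OF j] bp_def)
qed

lemma c_out: "j \<in> V \<Longrightarrow> snd e = j \<Longrightarrow> 0 \<le> c k j e"
  using vinv_D(4)[OF c_props] by blast
lemma c_in: "j \<in> V \<Longrightarrow> snd e \<noteq> j \<Longrightarrow> c k j e \<le> 0"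
  using vinv_D(6)[OF c_props] by blast
lemma c_zero: "j \<in> V \<Longrightarrow> e \<notin> incident E j \<Longrightarrow> c k j e = 0"
  using vinv_D(3)[OF c_props] order by blast
lemma c_units: "j \<in> V \<Longrightarrow> (if bp k j > 0 then bp k j else 0) =
   (\<Sum>e\<in>{e\<in>E. snd e = j}. c k j e) - (\<Sum>e\<in>{e\<in>E. fst e = j}. c k j e)"
  using vinv_D(2)[OF c_props] by blast
lemma c_upper: "j \<in> V \<Longrightarrow> snd e = j \<Longrightarrow> f k e \<le> U e \<Longrightarrow> f k e + c k j e \<le> U e"
  using vinv_D(5)[OF c_props] unfolding U_def by blast
lemma c_lower: "j \<in> V \<Longrightarrow> snd e \<noteq> j \<Longrightarrow> \<lceil>l e\<rceil> \<le> fp k e \<Longrightarrow> \<lceil>l e\<rceil> \<le> fp k e + c k j e"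
  using vinv_D(7)[OF c_props] by blast

lemma eV: "e \<in> E \<Longrightarrow> fst e \<in> V \<and> snd e \<in> V"
  using EV by auto
lemma eNL: "e \<in> E \<Longrightarrow> fst e \<noteq> snd e"
  using noloop by (cases e) auto

lemma P_tail: "e \<in> E \<Longrightarrow> 0 \<le> P (snd e) r e k"
  unfolding P_def by (rule sum_nonneg) (use c_out[of "snd e" e] eV[of e] in auto)
lemma P_head: "e \<in> E \<Longrightarrow> P (fst e) r e k \<le> 0"
  unfolding P_def by (rule sum_nonpos) (use c_in[of "fst e" e] eV[of e] eNL[of e] in auto)
lemma del_tail: "e \<in> E \<Longrightarrow> 0 \<le> delivered c d (snd e) r e k"
  unfolding delivered_def by (rule sum_nonneg) (use c_out[of "snd e" e] eV[of e] in auto)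
lemma del_head: "e \<in> E \<Longrightarrow> delivered c d (fst e) r e k \<le> 0"
  unfolding delivered_def by (rule sum_nonpos) (use c_in[of "fst e" e] eV[of e] eNL[of e] in auto)

lemma P_step: "P s r e (Suc k) = P s r e k + c k s e - delivered c d s r e k"
proof -
  let ?g = "\<lambda>k0. c k0 s e"
  define A where "A = {k0. k0 < k \<and> k \<le> k0 + d s r k0}"
  define A' where "A' = {k0. k0 < Suc k \<and> Suc k \<le> k0 + d s r k0}"
  define D where "D = {k0. k0 \<le> k \<and> k0 + d s r k0 = k}"
  have fA: "finite A" unfolding A_def by (rule finite_subset[of _ "{..<k}"]) auto
  have fA': "finite A'" unfolding A'_def by (rule finite_subset[of _ "{..<Suc k}"]) auto
  have fD: "finite D" unfolding D_def by (rule finite_subset[of _ "{..k}"]) auto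
  have eq: "insert k A = A' \<union> D" unfolding A_def A'_def D_def by auto
  have kA: "k \<notin> A" unfolding A_def by auto
  have dis: "A' \<inter> D = {}" unfolding A'_def D_def by auto
  have "sum ?g (insert k A) = ?g k + sum ?g A" using fA kA by simp
  moreover have "sum ?g (A' \<union> D) = sum ?g A' + sum ?g D" using fA' fD dis by (simp add: sum.union_disjoint)
  ultimately have "?g k + sum ?g A = sum ?g A' + sum ?g D" using eq by simp
  then show ?thesis unfolding P_def delivered_def A_def[symmetric] A'_def[symmetric] D_def[symmetric] by simp
qed

lemma proj_id: "\<lceil>l e\<rceil> \<le> x \<Longrightarrow> x \<le> U e \<Longrightarrow> proj l u e x = x"
  unfolding proj_def U_def by linarith

definition inv2 where "inv2 k = (\<forall>e\<in>E. \<lceil>l e\<rceil> \<le> fp k e \<and> f k e \<le> U e \<and>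
   f k e - fp k e = P (snd e) (fst e) e k - P (fst e) (snd e) e k)"

lemma step_gen:
  assumes I: "inv2 k" and e: "e \<in> E"
  shows "f (Suc k) e = f k e + c k (snd e) e + delivered c d (fst e) (snd e) e k \<and>
         fp (Suc k) e = fp k e + c k (fst e) e + delivered c d (snd e) (fst e) e k \<and>
         \<lceil>l e\<rceil> \<le> fp (Suc k) e \<and> f (Suc k) e \<le> U e \<and>
         f (Suc k) e - fp (Suc k) e = P (snd e) (fst e) e (Suc k) - P (fst e) (snd e) e (Suc k)"
proof -
  define ci where "ci = c k (snd e) e"
  define cj where "cj = c k (fst e) e"
  define dj where "dj = delivered c d (fst e) (snd e) e k"
  define di where "di = delivered c d (snd e) (fst e) e k"
  have V: "fst e \<in> V" "snd e \<in> V" using eV[OF e] by auto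
  have nl: "snd e \<noteq> fst e" using eNL[OF e] by auto
  have I1: "\<lceil>l e\<rceil> \<le> fp k e" "f k e \<le> U e"
    "f k e - fp k e = P (snd e) (fst e) e k - P (fst e) (snd e) e k"
    using I e unfolding inv2_def by auto
  have a1: "0 \<le> ci" unfolding ci_def using c_out V by auto
  have a2: "cj \<le> 0" unfolding cj_def using c_in V nl by auto
  have a3: "f k e + ci \<le> U e" unfolding ci_def using c_upper V I1 by auto
  have a4: "\<lceil>l e\<rceil> \<le> fp k e + cj" unfolding cj_def using c_lower V I1 nl by auto
  have a5: "dj \<le> 0" unfolding dj_def using del_head e by auto
  have a6: "0 \<le> di" unfolding di_def using del_tail e by auto
  have a7: "0 \<le> P (snd e) (fst e) e (Suc k)" "0 \<le> P (snd e) (fst e) e k"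
    using P_tail e by auto
  have a8: "P (fst e) (snd e) e (Suc k) \<le> 0" using P_head e by auto
  have s1: "P (snd e) (fst e) e (Suc k) = P (snd e) (fst e) e k + ci - di"
    unfolding ci_def di_def by (rule P_step)
  have s2: "P (fst e) (snd e) e (Suc k) = P (fst e) (snd e) e k + cj - dj"
    unfolding cj_def dj_def by (rule P_step)
  have xf1: "\<lceil>l e\<rceil> \<le> f k e + ci + dj" using a1 a4 a7 a8 s2 I1 by linarith
  have xf2: "f k e + ci + dj \<le> U e" using a3 a5 by linarith
  have xp1: "\<lceil>l e\<rceil> \<le> fp k e + cj + di" using a4 a6 by linarith
  have xp2: "fp k e + cj + di \<le> U e" using a2 a3 a7 s1 I1 a8 s2 a5
    by (smt (verit) P_head e)
  have F: "f (Suc k) e = f k e + ci + dj"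
    using upd_f e proj_id[OF xf1 xf2] unfolding ci_def dj_def by auto
  have FP: "fp (Suc k) e = fp k e + cj + di"
    using upd_fp e proj_id[OF xp1 xp2] unfolding cj_def di_def by auto
  show ?thesis using F FP xf2 xp1 s1 s2 I1 unfolding ci_def cj_def di_def dj_def by simp
qed

lemma inv2_all: "inv2 k"
proof (induction k)
  case 0
  have "P s r e 0 = 0" for s r e unfolding P_def by simp
  then show ?case using init_f unfolding inv2_def U_def by auto
next
  case (Suc k)
  then show ?case using step_gen unfolding inv2_def by blast
qed

lemma f_step: "e \<in> E \<Longrightarrow> f (Suc k) e = f k e + c k (snd e) e + delivered c d (fst e) (snd e) e k"
  using step_gen[OF inv2_all] by blast
lemma fp_step: "e \<in> E \<Longrightarrow> fp (Suc k) e = fp k e + c k (fst e) e + delivered c d (snd e) (fst e) e k"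
  using step_gen[OF inv2_all] by blast
lemma fdiff: "e \<in> E \<Longrightarrow> f k e - fp k e = P (snd e) (fst e) e k - P (fst e) (snd e) e k"
  using inv2_all unfolding inv2_def by blast

lemma bp_step:
  assumes j: "j \<in> V"
  shows "min (bp k j) 0 \<le> bp (Suc k) j"
proof -
  let ?Ein = "{e\<in>E. fst e = j}" and ?Eout = "{e\<in>E. snd e = j}"
  have e1: "(\<Sum>e\<in>?Ein. fp (Suc k) e) = (\<Sum>e\<in>?Ein. fp k e) + (\<Sum>e\<in>?Ein. c k j e)
      + (\<Sum>e\<in>?Ein. delivered c d (snd e) (fst e) e k)"
    unfolding sum.distrib[symmetric] by (rule sum.cong) (auto simp: fp_step)
  have e2: "(\<Sum>e\<in>?Eout. f (Suc k) e) = (\<Sum>e\<in>?Eout. f k e) + (\<Sum>e\<in>?Eout. c k j e)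
      + (\<Sum>e\<in>?Eout. delivered c d (fst e) (snd e) e k)"
    unfolding sum.distrib[symmetric] by (rule sum.cong) (auto simp: f_step)
  have n1: "0 \<le> (\<Sum>e\<in>?Ein. delivered c d (snd e) (fst e) e k)"
    by (rule sum_nonneg) (use del_tail in auto)
  have n2: "(\<Sum>e\<in>?Eout. delivered c d (fst e) (snd e) e k) \<le> 0"
    by (rule sum_nonpos) (use del_head in auto)
  have u: "(if bp k j > 0 then bp k j else 0) = (\<Sum>e\<in>?Eout. c k j e) - (\<Sum>e\<in>?Ein. c k j e)"
    by (rule c_units[OF j])
  have "bp (Suc k) j = bp k j + (\<Sum>e\<in>?Ein. c k j e) - (\<Sum>e\<in>?Eout. c k j e)
      + (\<Sum>e\<in>?Ein. delivered c d (snd e) (fst e) e k) - (\<Sum>e\<in>?Eout. delivered c d (fst e) (snd e) e k)"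
    unfolding bp_def pbalance_def e1 e2 by simp
  then show ?thesis using n1 n2 u by (cases "bp k j > 0") auto
qed

lemma bp_hist: "j \<in> V \<Longrightarrow> bp k j < 0 \<Longrightarrow> k0 \<le> k \<Longrightarrow> bp k0 j < 0"
proof (induction k)
  case 0 then show ?case by simp
next
  case (Suc k)
  show ?case
  proof (cases "k0 = Suc k")
    case True then show ?thesis using Suc by simp
  next
    case False
    have "bp k j < 0" using bp_step[OF Suc.prems(1), of k] Suc.prems(2) by linarith
    then show ?thesis using Suc False by simp
  qed
qed

lemma grp_fst: "(\<Sum>j\<in>V. \<Sum>e\<in>{e\<in>E. fst e = j}. g e) = (\<Sum>e\<in>E. g e)"
  by (rule sum.group[OF finE finV]) (use EV in auto)
lemma grp_snd: "(\<Sum>j\<in>V. \<Sum>e\<in>{e\<in>E. snd e = j}. g e) = (\<Sum>e\<in>E. g e)"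
  by (rule sum.group[OF finE finV]) (use EV in auto)

definition A where "A k j = (\<Sum>e\<in>{e\<in>E. snd e = j}. c k (snd e) e)
   - (\<Sum>e\<in>{e\<in>E. fst e = j}. delivered c d (fst e) (snd e) e k)"
definition B where "B k j = (\<Sum>e\<in>{e\<in>E. fst e = j}. c k (snd e) e)
   - (\<Sum>e\<in>{e\<in>E. snd e = j}. delivered c d (fst e) (snd e) e k)"

lemma bal_step: "balance E (f (Suc k)) j = balance E (f k) j - A k j + B k j"
proof -
  let ?Ein = "{e\<in>E. fst e = j}" and ?Eout = "{e\<in>E. snd e = j}"
  have e1: "(\<Sum>e\<in>?Ein. f (Suc k) e) = (\<Sum>e\<in>?Ein. f k e) + (\<Sum>e\<in>?Ein. c k (snd e) e)
      + (\<Sum>e\<in>?Ein. delivered c d (fst e) (snd e) e k)"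
    unfolding sum.distrib[symmetric] by (rule sum.cong) (auto simp: f_step)
  have e2: "(\<Sum>e\<in>?Eout. f (Suc k) e) = (\<Sum>e\<in>?Eout. f k e) + (\<Sum>e\<in>?Eout. c k (snd e) e)
      + (\<Sum>e\<in>?Eout. delivered c d (fst e) (snd e) e k)"
    unfolding sum.distrib[symmetric] by (rule sum.cong) (auto simp: f_step)
  show ?thesis unfolding balance_def e1 e2 A_def B_def by simp
qed

lemma A_nonneg: "0 \<le> A k j"
proof -
  have "0 \<le> (\<Sum>e\<in>{e\<in>E. snd e = j}. c k (snd e) e)"
    by (rule sum_nonneg) (use c_out eV in auto)
  moreover have "(\<Sum>e\<in>{e\<in>E. fst e = j}. delivered c d (fst e) (snd e) e k) \<le> 0"
    by (rule sum_nonpos) (use del_head in auto)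
  ultimately show ?thesis unfolding A_def by linarith
qed

lemma B_nonneg: "0 \<le> B k j"
proof -
  have "0 \<le> (\<Sum>e\<in>{e\<in>E. fst e = j}. c k (snd e) e)"
    by (rule sum_nonneg) (use c_out eV in auto)
  moreover have "(\<Sum>e\<in>{e\<in>E. snd e = j}. delivered c d (fst e) (snd e) e k) \<le> 0"
    by (rule sum_nonpos) (use del_head in auto)
  ultimately show ?thesis unfolding B_def by linarith
qed

lemma sumAB: "(\<Sum>j\<in>V. A k j) = (\<Sum>j\<in>V. B k j)"
  unfolding A_def B_def sum_subtractf grp_fst grp_snd by simp

lemma A_key:
  assumes j: "j \<in> V"
  shows "A k j = 0 \<or> A k j \<le> balance E (f k) j"
proof (cases "bp k j < 0")
  case True
  have z: "c k0 j e = 0" if "k0 \<le> k" for k0 e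
  proof -
    have "pbalance E (f k0) (fp k0) j \<le> 0" using bp_hist[OF j True that] unfolding bp_def by simp
    with step_nonpos j have "\<forall>e. c k0 j e = 0" by blast
    then show ?thesis by blast
  qed
  have "(\<Sum>e\<in>{e\<in>E. snd e = j}. c k (snd e) e) = 0"
    by (rule sum.neutral) (use z in auto)
  moreover have "(\<Sum>e\<in>{e\<in>E. fst e = j}. delivered c d (fst e) (snd e) e k) = 0"
    by (rule sum.neutral) (auto simp: delivered_def z intro!: sum.neutral)
  ultimately show ?thesis unfolding A_def by simp
next
  case False
  let ?Ein = "{e\<in>E. fst e = j}" and ?Eout = "{e\<in>E. snd e = j}"
  have u: "bp k j = (\<Sum>e\<in>?Eout. c k j e) - (\<Sum>e\<in>?Ein. c k j e)"
    using c_units[OF j, of k] False by (simp split: if_splits)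
  have h1: "(\<Sum>e\<in>?Ein. delivered c d (fst e) (snd e) e k) =
      (\<Sum>e\<in>?Ein. P (fst e) (snd e) e k) + (\<Sum>e\<in>?Ein. c k j e) - (\<Sum>e\<in>?Ein. P (fst e) (snd e) e (Suc k))"
    unfolding sum.distrib[symmetric] sum_subtractf[symmetric]
    by (rule sum.cong) (auto simp: P_step)
  have h2: "(\<Sum>e\<in>?Ein. P (fst e) (snd e) e (Suc k)) \<le> 0"
    by (rule sum_nonpos) (use P_head in auto)
  have h4: "(\<Sum>e\<in>?Eout. c k (snd e) e) = (\<Sum>e\<in>?Eout. c k j e)"
    by (rule sum.cong) auto
  have h5: "balance E (f k) j - bp k j = (\<Sum>e\<in>?Ein. P (snd e) (fst e) e k) - (\<Sum>e\<in>?Ein. P (fst e) (snd e) e k)"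
  proof -
    have "balance E (f k) j - bp k j = (\<Sum>e\<in>?Ein. f k e - fp k e)"
      unfolding balance_def bp_def pbalance_def sum_subtractf by simp
    also have "... = (\<Sum>e\<in>?Ein. P (snd e) (fst e) e k - P (fst e) (snd e) e k)"
      by (rule sum.cong) (auto simp: fdiff)
    finally show ?thesis unfolding sum_subtractf .
  qed
  have h6: "0 \<le> (\<Sum>e\<in>?Ein. P (snd e) (fst e) e k)"
    by (rule sum_nonneg) (use P_tail in auto)
  have "A k j \<le> balance E (f k) j"
    unfolding A_def using u h1 h2 h4 h5 h6 by linarith
  then show ?thesis by simp
qed

lemma main: "total_imbalance V E (f (Suc k)) \<le> total_imbalance V E (f k)"
proof -
  have "total_imbalance V E (f (Suc k)) = (\<Sum>j\<in>V. \<bar>balance E (f k) j - A k j + B k j\<bar>)"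
    unfolding total_imbalance_def bal_step ..
  also have "... \<le> (\<Sum>j\<in>V. \<bar>balance E (f k) j\<bar> - A k j + B k j)"
  proof (rule sum_mono)
    fix j assume j: "j \<in> V"
    show "\<bar>balance E (f k) j - A k j + B k j\<bar> \<le> \<bar>balance E (f k) j\<bar> - A k j + B k j"
      using A_key[OF j, of k] A_nonneg[of k j] B_nonneg[of k j] by linarith
  qed
  also have "... = (\<Sum>j\<in>V. \<bar>balance E (f k) j\<bar>) - (\<Sum>j\<in>V. A k j) + (\<Sum>j\<in>V. B k j)"
    by (simp add: sum.distrib sum_subtractf)
  also have "... = total_imbalance V E (f k)"
    unfolding total_imbalance_def sumAB by simp
  finally show ?thesis .
qed

end

theorem proposition3:
  fixes V :: "'v set" and E :: "('v \<times> 'v) set"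
    and l u :: "'v \<times> 'v \<Rightarrow> real"
    and ord :: "'v \<Rightarrow> ('v \<times> 'v) list"
    and d :: "'v \<Rightarrow> 'v \<Rightarrow> nat \<Rightarrow> nat" and taubar :: nat
    and f fp :: "nat \<Rightarrow> 'v \<times> 'v \<Rightarrow> int"
    and c :: "nat \<Rightarrow> 'v \<Rightarrow> 'v \<times> 'v \<Rightarrow> int"
    and ptr :: "nat \<Rightarrow> 'v \<Rightarrow> nat"
  assumes finV: "finite V" and cardV: "card V \<ge> 2"
    and EV: "E \<subseteq> V \<times> V" and noloop: "\<forall>v. (v, v) \<notin> E"
    and strong: "\<forall>x\<in>V. \<forall>y\<in>V. (x, y) \<in> E\<^sup>*"
    and bounds: "\<forall>e\<in>E. 1 \<le> l e \<and> l e \<le> u e"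
    and order: "\<forall>j\<in>V. distinct (ord j) \<and> set (ord j) = incident E j"
    and delay: "\<forall>s r k. d s r k \<le> taubar"
    and init_f: "\<forall>e\<in>E. f 0 e = \<lceil>l e\<rceil> \<and> fp 0 e = \<lceil>l e\<rceil>"
    and init_ptr: "\<forall>j\<in>V. ptr 0 j < length (ord j)"
    and step_pos: "\<forall>k. \<forall>j\<in>V. pbalance E (f k) (fp k) j > 0 \<longrightarrow>
        (\<exists>m. (visit l u j (ord j) (f k) (fp k) ^^ m) (ptr k j, \<lambda>_. 0, 0)
               = (ptr (Suc k) j, c k j, pbalance E (f k) (fp k) j)
           \<and> (\<forall>m'<m. snd (snd ((visit l u j (ord j) (f k) (fp k) ^^ m') (ptr k j, \<lambda>_. 0, 0)))
                      \<noteq> pbalance E (f k) (fp k) j))"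
    and step_nonpos: "\<forall>k. \<forall>j\<in>V. pbalance E (f k) (fp k) j \<le> 0 \<longrightarrow>
        ptr (Suc k) j = ptr k j \<and> (\<forall>e. c k j e = 0)"
    and upd_f: "\<forall>k. \<forall>e\<in>E. f (Suc k) e =
        proj l u e (f k e + c k (snd e) e + delivered c d (fst e) (snd e) e k)"
    and upd_fp: "\<forall>k. \<forall>e\<in>E. fp (Suc k) e =
        proj l u e (fp k e + c k (fst e) e + delivered c d (snd e) (fst e) e k)"
  shows "0 \<le> total_imbalance V E (f (Suc k)) \<and>
         total_imbalance V E (f (Suc k)) \<le> total_imbalance V E (f k)"
proof -
  interpret alg V E l u ord d taubar f fp c ptr
    by (rule alg.intro) (use assms in auto)
  show ?thesis using main unfolding total_imbalance_def by (simp add: sum_nonneg)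
qed

end
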